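(* Let $G$ be a hyperbolic group and $\partial_\infty G$ its boundary at infinity, equipped with any visual metric $d$. Then $(\partial_\infty G,d)$ admits a finite expanding cover: there are finitely many open sets $U_1,\dots,U_N$ covering $\partial_\infty G$, maps $f_i:U_i\to\partial_\infty G$ and constants $L_i>1$ such that $d(f_i(x),f_i(y))\ge L_i\,d(x,y)$ for all $x,y\in U_i$.
   Context: A finitely generated group $G$ is hyperbolic if its Cayley graph $\Gamma(G,S)$ for some finite symmetric generating set $S$ (with path metric) is $\delta$-hyperbolic for some $\delta\ge0$. $\partial_\infty G=\partial_\infty\Gamma(G,S)$ is the Gromov boundary (equivalence classes of geodesic rays from a base point, rays equivalent when at finite Hausdorff distance), with its natural topology; Gromov product $(x,y)_o=\frac12(d(x,o)+d(y,o)-d(x,y))$, extended to the boundary by $(x,y)_o=\sup\liminf_{i,j}(x_i,y_j)_o$ over sequences representing $x,y$. A metric $d$ on $\partial_\infty G$ is visual (with base point $o$ and parameter $a>1$) if it induces the natural topology and $C_1a^{-(x,y)_o}\le d(x,y)\le C_2a^{-(x,y)_o}$ for some $C_1,C_2>0$ and all distinct $x,y$. *)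

theory Defs
  imports "HOL-Algebra.Generated_Groups" "HOL-Analysis.Abstract_Metric_Spaces"
    "HOL-Library.Extended_Real"
begin

definition fin_sym_gen :: "('a, 'b) monoid_scheme \<Rightarrow> 'a set \<Rightarrow> bool" where
  "fin_sym_gen G S \<longleftrightarrow> finite S \<and> S \<subseteq> carrier G \<and> (\<forall>s\<in>S. inv\<^bsub>G\<^esub> s \<in> S)
     \<and> generate G S = carrier G"

definition word_prod :: "('a, 'b) monoid_scheme \<Rightarrow> 'a list \<Rightarrow> 'a" where
  "word_prod G ws = foldr (\<lambda>s acc. s \<otimes>\<^bsub>G\<^esub> acc) ws \<one>\<^bsub>G\<^esub>"

text \<open>Path metric of the Cayley graph Gamma(G,S) restricted to vertices (word metric).\<close>
definition wdist :: "('a, 'b) monoid_scheme \<Rightarrow> 'a set \<Rightarrow> 'a \<Rightarrow> 'a \<Rightarrow> real" where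
  "wdist G S g h = real (LEAST n. \<exists>ws. length ws = n \<and> set ws \<subseteq> S \<and> h = g \<otimes>\<^bsub>G\<^esub> word_prod G ws)"

definition gprod :: "('a, 'b) monoid_scheme \<Rightarrow> 'a set \<Rightarrow> 'a \<Rightarrow> 'a \<Rightarrow> 'a \<Rightarrow> real" where
  "gprod G S p x y = (wdist G S x p + wdist G S y p - wdist G S x y) / 2"

text \<open>Gamma(G,S) is delta-hyperbolic for some delta (Gromov four-point condition on vertices).\<close>
definition cayley_hyperbolic :: "('a, 'b) monoid_scheme \<Rightarrow> 'a set \<Rightarrow> bool" where
  "cayley_hyperbolic G S \<longleftrightarrow> (\<exists>\<delta>::real. \<delta> \<ge> 0 \<and>
     (\<forall>w\<in>carrier G. \<forall>x\<in>carrier G. \<forall>y\<in>carrier G. \<forall>z\<in>carrier G.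
        gprod G S w x z \<ge> min (gprod G S w x y) (gprod G S w y z) - \<delta>))"

text \<open>Geodesic rays in Gamma(G,S) from the base vertex 1 (they pass through vertices at integer times).\<close>
definition geod_ray :: "('a, 'b) monoid_scheme \<Rightarrow> 'a set \<Rightarrow> (nat \<Rightarrow> 'a) \<Rightarrow> bool" where
  "geod_ray G S \<gamma> \<longleftrightarrow> \<gamma> 0 = \<one>\<^bsub>G\<^esub> \<and> (\<forall>i. \<gamma> i \<in> carrier G) \<and>
     (\<forall>i j. wdist G S (\<gamma> i) (\<gamma> j) = \<bar>real i - real j\<bar>)"

definition ray_equiv :: "('a, 'b) monoid_scheme \<Rightarrow> 'a set \<Rightarrow> (nat \<Rightarrow> 'a) \<Rightarrow> (nat \<Rightarrow> 'a) \<Rightarrow> bool" where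
  "ray_equiv G S \<gamma> \<eta> \<longleftrightarrow> (\<exists>K::real. (\<forall>i. \<exists>j. wdist G S (\<gamma> i) (\<eta> j) \<le> K)
                                   \<and> (\<forall>j. \<exists>i. wdist G S (\<gamma> i) (\<eta> j) \<le> K))"

definition gbdry :: "('a, 'b) monoid_scheme \<Rightarrow> 'a set \<Rightarrow> (nat \<Rightarrow> 'a) set set" where
  "gbdry G S = {{\<eta>. geod_ray G S \<eta> \<and> ray_equiv G S \<gamma> \<eta>} | \<gamma>. geod_ray G S \<gamma>}"

definition seq_to :: "('a, 'b) monoid_scheme \<Rightarrow> 'a set \<Rightarrow> (nat \<Rightarrow> 'a) \<Rightarrow> (nat \<Rightarrow> 'a) set \<Rightarrow> bool" where
  "seq_to G S x \<xi> \<longleftrightarrow> (\<forall>i. x i \<in> carrier G) \<and>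
     (\<exists>\<gamma>\<in>\<xi>. \<forall>M::real. \<exists>N. \<forall>i\<ge>N. \<forall>j\<ge>N. gprod G S \<one>\<^bsub>G\<^esub> (x i) (\<gamma> j) \<ge> M)"

definition gprod_bd :: "('a, 'b) monoid_scheme \<Rightarrow> 'a set \<Rightarrow> 'a \<Rightarrow> (nat \<Rightarrow> 'a) set \<Rightarrow> (nat \<Rightarrow> 'a) set \<Rightarrow> ereal" where
  "gprod_bd G S p \<xi> \<eta> = (SUP xy \<in> {(x, y). seq_to G S x \<xi> \<and> seq_to G S y \<eta>}.
      (SUP N. INF i \<in> {N..}. INF j \<in> {N..}. ereal (gprod G S p (fst xy i) (snd xy j))))"

definition nat_topology :: "('a, 'b) monoid_scheme \<Rightarrow> 'a set \<Rightarrow> 'a \<Rightarrow> (nat \<Rightarrow> 'a) set topology" where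
  "nat_topology G S p = topology (\<lambda>U. U \<subseteq> gbdry G S \<and>
     (\<forall>\<xi>\<in>U. \<exists>r::real. {\<eta> \<in> gbdry G S. ereal r < gprod_bd G S p \<xi> \<eta>} \<subseteq> U))"

definition visual_metric :: "('a, 'b) monoid_scheme \<Rightarrow> 'a set \<Rightarrow>
    ((nat \<Rightarrow> 'a) set \<Rightarrow> (nat \<Rightarrow> 'a) set \<Rightarrow> real) \<Rightarrow> bool" where
  "visual_metric G S d \<longleftrightarrow> Metric_space (gbdry G S) d \<and>
     (\<exists>p\<in>carrier G. \<exists>a::real. a > 1 \<and>
        Metric_space.mtopology (gbdry G S) d = nat_topology G S p \<and>
        (\<exists>C1 C2::real. C1 > 0 \<and> C2 > 0 \<and>
          (\<forall>x\<in>gbdry G S. \<forall>y\<in>gbdry G S. x \<noteq> y \<longrightarrow>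
             C1 * a powr (- real_of_ereal (gprod_bd G S p x y)) \<le> d x y \<and>
             d x y \<le> C2 * a powr (- real_of_ereal (gprod_bd G S p x y)))))"

end

theory Submission
  imports Defs
begin

definition wdn :: "('a, 'b) monoid_scheme \<Rightarrow> 'a set \<Rightarrow> 'a \<Rightarrow> 'a \<Rightarrow> nat" where
  "wdn G S g h = (LEAST n. \<exists>ws. length ws = n \<and> set ws \<subseteq> S \<and> h = g \<otimes>\<^bsub>G\<^esub> word_prod G ws)"

lemma wdist_wdn: "wdist G S g h = real (wdn G S g h)"
  by (simp add: wdist_def wdn_def)

locale hypg = group + fixes S :: "'a set"
  assumes fsg: "fin_sym_gen G S"
begin

lemma S_sub: "S \<subseteq> carrier G" and S_fin: "finite S" and S_inv: "s \<in> S \<Longrightarrow> inv s \<in> S"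
  and S_gen: "generate G S = carrier G"
  using fsg by (auto simp: fin_sym_gen_def)

lemma wp_Nil[simp]: "word_prod G [] = \<one>" by (simp add: word_prod_def)
lemma wp_Cons[simp]: "word_prod G (s # ws) = s \<otimes> word_prod G ws" by (simp add: word_prod_def)

lemma wp_carrier[simp]: "set ws \<subseteq> S \<Longrightarrow> word_prod G ws \<in> carrier G"
  by (induction ws) (use S_sub in auto)

lemma wp_append: "set ws \<subseteq> S \<Longrightarrow> set vs \<subseteq> S \<Longrightarrow>
   word_prod G (ws @ vs) = word_prod G ws \<otimes> word_prod G vs"
  by (induction ws) (use S_sub in \<open>auto simp: m_assoc\<close>)

lemma wp_inv: "set ws \<subseteq> S \<Longrightarrow> word_prod G (rev (map (\<lambda>s. inv s) ws)) = inv (word_prod G ws)"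
proof (induction ws)
  case Nil then show ?case by simp
next
  case (Cons s ws)
  have s: "s \<in> S" using Cons by auto
  have ws: "set ws \<subseteq> S" using Cons by auto
  have sub: "set (rev (map (\<lambda>s. inv s) ws)) \<subseteq> S" using ws S_inv by auto
  have "word_prod G (rev (map (\<lambda>s. inv s) (s # ws))) = word_prod G (rev (map (\<lambda>s. inv s) ws)) \<otimes> word_prod G [inv s]"
    using wp_append[OF sub, of "[inv s]"] S_inv s by simp
  also have "\<dots> = inv (word_prod G ws) \<otimes> inv s" using Cons s S_sub by auto
  also have "\<dots> = inv (s \<otimes> word_prod G ws)" using s S_sub ws by (simp add: inv_mult_group subsetD)
  finally show ?case by simp
qed

lemma gen_words: "h \<in> generate G S \<Longrightarrow> \<exists>ws. set ws \<subseteq> S \<and> h = word_prod G ws"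
proof (induction rule: generate.induct)
  case one then show ?case by (intro exI[of _ "[]"]) simp
next
  case (incl h) then show ?case using S_sub by (intro exI[of _ "[h]"]) auto
next
  case (inv h) then show ?case using S_sub S_inv by (intro exI[of _ "[inv h]"]) auto
next
  case (eng h1 h2)
  then obtain w1 w2 where "set w1 \<subseteq> S" "h1 = word_prod G w1" "set w2 \<subseteq> S" "h2 = word_prod G w2" by blast
  then show ?case by (intro exI[of _ "w1 @ w2"]) (simp add: wp_append)
qed

lemma words_exist: assumes "x \<in> carrier G" "y \<in> carrier G"
  shows "\<exists>ws. set ws \<subseteq> S \<and> y = x \<otimes> word_prod G ws"
proof -
  obtain ws where ws: "set ws \<subseteq> S" "inv x \<otimes> y = word_prod G ws"
    using gen_words[of "inv x \<otimes> y"] S_gen assms by auto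
  have "y = x \<otimes> (inv x \<otimes> y)" using assms by (simp add: m_assoc[symmetric])
  then show ?thesis using ws by auto
qed

lemma wdn_ex: assumes "x \<in> carrier G" "y \<in> carrier G"
  shows "\<exists>ws. length ws = wdn G S x y \<and> set ws \<subseteq> S \<and> y = x \<otimes> word_prod G ws"
proof -
  obtain ws where "set ws \<subseteq> S \<and> y = x \<otimes> word_prod G ws" using words_exist[OF assms] by blast
  then have "\<exists>n ws. length ws = n \<and> set ws \<subseteq> S \<and> y = x \<otimes> word_prod G ws" by blast
  then show ?thesis unfolding wdn_def by (rule LeastI_ex)
qed

lemma wdn_le: "set ws \<subseteq> S \<Longrightarrow> y = x \<otimes> word_prod G ws \<Longrightarrow> wdn G S x y \<le> length ws"
  unfolding wdn_def by (rule Least_le) blast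

lemma wdn_refl[simp]: "x \<in> carrier G \<Longrightarrow> wdn G S x x = 0"
  using wdn_le[of "[]" x x] by simp

lemma wdn_zero: assumes "x \<in> carrier G" "y \<in> carrier G" "wdn G S x y = 0" shows "x = y"
  using wdn_ex[OF assms(1,2)] assms by auto

lemma wdn_sym: assumes "x \<in> carrier G" "y \<in> carrier G" shows "wdn G S x y = wdn G S y x"
proof -
  have le: "wdn G S b a \<le> wdn G S a b" if ab: "a \<in> carrier G" "b \<in> carrier G" for a b
  proof -
    obtain ws where ws: "length ws = wdn G S a b" "set ws \<subseteq> S" "b = a \<otimes> word_prod G ws"
      using wdn_ex[OF ab] by blast
    have sub: "set (rev (map (\<lambda>s. inv s) ws)) \<subseteq> S" using ws S_inv by auto
    have "a = b \<otimes> word_prod G (rev (map (\<lambda>s. inv s) ws))"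
      using ws ab by (simp add: wp_inv m_assoc)
    then show ?thesis using wdn_le[OF sub] ws by force
  qed
  show ?thesis using le[OF assms] le[OF assms(2,1)] by simp
qed

lemma wdn_triangle: assumes "x \<in> carrier G" "y \<in> carrier G" "z \<in> carrier G"
  shows "wdn G S x z \<le> wdn G S x y + wdn G S y z"
proof -
  obtain ws where ws: "length ws = wdn G S x y" "set ws \<subseteq> S" "y = x \<otimes> word_prod G ws"
    using wdn_ex assms by blast
  obtain vs where vs: "length vs = wdn G S y z" "set vs \<subseteq> S" "z = y \<otimes> word_prod G vs"
    using wdn_ex assms by blast
  have "z = x \<otimes> word_prod G (ws @ vs)" using ws vs assms by (simp add: wp_append m_assoc)
  then show ?thesis using wdn_le[of "ws @ vs" z x] ws vs by simp
qed

lemma wdn_inv_mult: assumes "h \<in> carrier G" "x \<in> carrier G" "y \<in> carrier G"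
  shows "wdn G S (h \<otimes> x) (h \<otimes> y) = wdn G S x y"
proof -
  have "(h \<otimes> y = h \<otimes> x \<otimes> word_prod G ws) = (y = x \<otimes> word_prod G ws)" if "set ws \<subseteq> S" for ws
    using that assms by (simp add: m_assoc)
  then show ?thesis unfolding wdn_def by meson
qed


lemma wdist_refl[simp]: "x \<in> carrier G \<Longrightarrow> wdist G S x x = 0"
  by (simp add: wdist_wdn)
lemma wdist_nonneg[simp]: "wdist G S x y \<ge> 0"
  by (simp add: wdist_wdn)
lemma wdist_sym: "x \<in> carrier G \<Longrightarrow> y \<in> carrier G \<Longrightarrow> wdist G S x y = wdist G S y x"
  by (simp add: wdist_wdn wdn_sym)
lemma wdist_tri: "x \<in> carrier G \<Longrightarrow> y \<in> carrier G \<Longrightarrow> z \<in> carrier G \<Longrightarrow>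
   wdist G S x z \<le> wdist G S x y + wdist G S y z"
  unfolding wdist_wdn using wdn_triangle by (metis of_nat_add of_nat_mono)
lemma wdist_eq0: "x \<in> carrier G \<Longrightarrow> y \<in> carrier G \<Longrightarrow> wdist G S x y = 0 \<Longrightarrow> x = y"
  unfolding wdist_wdn using wdn_zero by simp
lemma wdist_mult: "h \<in> carrier G \<Longrightarrow> x \<in> carrier G \<Longrightarrow> y \<in> carrier G \<Longrightarrow>
   wdist G S (h \<otimes> x) (h \<otimes> y) = wdist G S x y"
  by (simp add: wdist_wdn wdn_inv_mult)

lemma geodesic_seg: assumes "x \<in> carrier G" "y \<in> carrier G"
  shows "\<exists>\<sigma>. \<sigma> 0 = x \<and> \<sigma> (wdn G S x y) = y \<and> (\<forall>i. \<sigma> i \<in> carrier G) \<and>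
     (\<forall>i. \<sigma> i = \<sigma> (min i (wdn G S x y))) \<and>
     (\<forall>i j. i \<le> j \<longrightarrow> j \<le> wdn G S x y \<longrightarrow> wdn G S (\<sigma> i) (\<sigma> j) = j - i)"
proof -
  obtain ws where ws: "length ws = wdn G S x y" "set ws \<subseteq> S" "y = x \<otimes> word_prod G ws"
    using wdn_ex[OF assms] by blast
  define \<sigma> where "\<sigma> i = x \<otimes> word_prod G (take i ws)" for i
  have sub: "set (take i ws) \<subseteq> S" for i using ws(2) set_take_subset by fastforce
  have car: "\<sigma> i \<in> carrier G" for i unfolding \<sigma>_def using sub assms by simp
  have d0: "wdn G S x (\<sigma> i) \<le> i" for i
    using wdn_le[OF sub[of i], of "\<sigma> i" x] by (simp add: \<sigma>_def)
  have dmid: "wdn G S (\<sigma> i) (\<sigma> j) \<le> j - i" if "i \<le> j" for i j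
  proof -
    have st: "set (take (j - i) (drop i ws)) \<subseteq> S" using ws(2)
      by (meson order_trans set_drop_subset set_take_subset)
    have "take j ws = take i ws @ take (j - i) (drop i ws)" using that
      by (metis add_diff_inverse_nat not_less take_add)
    then have "\<sigma> j = \<sigma> i \<otimes> word_prod G (take (j - i) (drop i ws))"
      unfolding \<sigma>_def using sub st assms by (simp add: wp_append m_assoc)
    then show ?thesis using wdn_le[OF st] by fastforce
  qed
  have dend: "wdn G S (\<sigma> j) y \<le> wdn G S x y - j" for j
  proof -
    have "y = \<sigma> (length ws)" using ws by (simp add: \<sigma>_def)
    moreover have "wdn G S (\<sigma> j) (\<sigma> (length ws)) \<le> length ws - j"
    proof (cases "j \<le> length ws")
      case True then show ?thesis using dmid by blast
    next
      case False then have "\<sigma> j = \<sigma> (length ws)" by (simp add: \<sigma>_def)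
      then show ?thesis using car by simp
    qed
    ultimately show ?thesis using ws by simp
  qed
  have "wdn G S (\<sigma> i) (\<sigma> j) = j - i" if "i \<le> j" "j \<le> wdn G S x y" for i j
  proof -
    have "wdn G S x y \<le> wdn G S x (\<sigma> i) + wdn G S (\<sigma> i) (\<sigma> j) + wdn G S (\<sigma> j) y"
      using wdn_triangle car assms by (meson add_mono_thms_linordered_semiring(3) order_trans)
    then show ?thesis using d0[of i] dend[of j] dmid[OF that(1)] that by linarith
  qed
  moreover have "\<sigma> i = \<sigma> (min i (wdn G S x y))" for i
    unfolding \<sigma>_def using ws(1) by (metis min_def nat_le_linear take_all)
  ultimately show ?thesis using car ws assms by (intro exI[of _ \<sigma>]) (auto simp: \<sigma>_def)
qed

lemma ball_finite: "finite {y \<in> carrier G. wdn G S \<one> y \<le> n}"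
proof -
  have "{y \<in> carrier G. wdn G S \<one> y \<le> n} \<subseteq> (\<lambda>ws. word_prod G ws) ` {ws. set ws \<subseteq> S \<and> length ws \<le> n}"
  proof
    fix y assume "y \<in> {y \<in> carrier G. wdn G S \<one> y \<le> n}"
    then obtain ws where "length ws = wdn G S \<one> y" "set ws \<subseteq> S" "y = \<one> \<otimes> word_prod G ws"
      "wdn G S \<one> y \<le> n" using wdn_ex[of \<one> y] by auto
    then show "y \<in> (\<lambda>ws. word_prod G ws) ` {ws. set ws \<subseteq> S \<and> length ws \<le> n}" by auto
  qed
  then show ?thesis using finite_lists_length_le[OF S_fin] finite_surj by blast
qed

abbreviation gp where "gp \<equiv> gprod G S"

lemma gp_sym: "x \<in> carrier G \<Longrightarrow> y \<in> carrier G \<Longrightarrow> gp p x y = gp p y x"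
  by (simp add: gprod_def wdist_sym)

lemma gp_base: assumes "p \<in> carrier G" "q \<in> carrier G" "x \<in> carrier G" "y \<in> carrier G"
  shows "\<bar>gp p x y - gp q x y\<bar> \<le> wdist G S p q"
proof -
  have "wdist G S x p \<le> wdist G S x q + wdist G S q p" "wdist G S x q \<le> wdist G S x p + wdist G S p q"
       "wdist G S y p \<le> wdist G S y q + wdist G S q p" "wdist G S y q \<le> wdist G S y p + wdist G S p q"
    using wdist_tri assms by blast+
  then show ?thesis using wdist_sym[OF assms(1,2)] unfolding gprod_def abs_le_iff by (intro conjI; simp add: field_simps)
qed

lemma gp_ge: assumes "p \<in> carrier G" "x \<in> carrier G" "y \<in> carrier G"
  shows "gp p x y \<ge> wdist G S x p - wdist G S x y"
proof -
  have "wdist G S x p \<le> wdist G S x y + wdist G S y p" using wdist_tri assms by blast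
  then show ?thesis unfolding gprod_def by simp
qed

lemma gp_mult: "h \<in> carrier G \<Longrightarrow> p \<in> carrier G \<Longrightarrow> x \<in> carrier G \<Longrightarrow> y \<in> carrier G \<Longrightarrow>
   gp (h \<otimes> p) (h \<otimes> x) (h \<otimes> y) = gp p x y"
  by (simp add: gprod_def wdist_mult)

end

definition asym :: "('a, 'b) monoid_scheme \<Rightarrow> 'a set \<Rightarrow> (nat \<Rightarrow> 'a) \<Rightarrow> (nat \<Rightarrow> 'a) \<Rightarrow> bool" where
  "asym G S x y \<longleftrightarrow> (\<forall>M::real. \<exists>N. \<forall>i\<ge>N. \<forall>j\<ge>N. gprod G S \<one>\<^bsub>G\<^esub> (x i) (y j) \<ge> M)"

definition cls :: "('a, 'b) monoid_scheme \<Rightarrow> 'a set \<Rightarrow> (nat \<Rightarrow> 'a) \<Rightarrow> (nat \<Rightarrow> 'a) set" where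
  "cls G S \<gamma> = {\<eta>. geod_ray G S \<eta> \<and> ray_equiv G S \<gamma> \<eta>}"

locale hypd = hypg +
  fixes \<delta> :: real
  assumes d0: "\<delta> \<ge> 0"
  and fp: "\<And>w x y z. w \<in> carrier G \<Longrightarrow> x \<in> carrier G \<Longrightarrow> y \<in> carrier G \<Longrightarrow> z \<in> carrier G \<Longrightarrow>
        gp w x z \<ge> min (gp w x y) (gp w y z) - \<delta>"
begin

lemma fp2: "w \<in> carrier G \<Longrightarrow> x \<in> carrier G \<Longrightarrow> y \<in> carrier G \<Longrightarrow> u \<in> carrier G \<Longrightarrow> z \<in> carrier G \<Longrightarrow>
        gp w x z \<ge> min (gp w x y) (min (gp w y u) (gp w u z)) - 2 * \<delta>"
  unfolding min_def using fp[of w x y z] fp[of w y u z] d0 by (smt (verit))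

lemma ray_car[simp]: "geod_ray G S \<gamma> \<Longrightarrow> \<gamma> i \<in> carrier G"
  by (simp add: geod_ray_def)
lemma ray0: "geod_ray G S \<gamma> \<Longrightarrow> \<gamma> 0 = \<one>"
  by (simp add: geod_ray_def)
lemma ray_dist: "geod_ray G S \<gamma> \<Longrightarrow> wdist G S (\<gamma> i) (\<gamma> j) = \<bar>real i - real j\<bar>"
  by (simp add: geod_ray_def)
lemma ray_d1: "geod_ray G S \<gamma> \<Longrightarrow> wdist G S (\<gamma> i) \<one> = i"
  using ray_dist[of \<gamma> i 0] ray0 by simp
lemma ray_d1': "geod_ray G S \<gamma> \<Longrightarrow> wdist G S \<one> (\<gamma> i) = i"
  using ray_dist[of \<gamma> 0 i] ray0 by simp
lemma ray_gp: "geod_ray G S \<gamma> \<Longrightarrow> gp \<one> (\<gamma> i) (\<gamma> j) = min i j"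
  unfolding gprod_def using ray_d1[of \<gamma>] ray_dist[of \<gamma> i j] by (simp add: min_def abs_if)

lemma ray_mono: assumes "geod_ray G S \<gamma>" "geod_ray G S \<eta>" "i \<le> i'" "j \<le> j'"
  shows "gp \<one> (\<gamma> i) (\<eta> j) \<le> gp \<one> (\<gamma> i') (\<eta> j')"
proof -
  have "wdist G S (\<gamma> i') (\<eta> j') \<le> wdist G S (\<gamma> i') (\<gamma> i) + wdist G S (\<gamma> i) (\<eta> j')"
    using wdist_tri assms by simp
  also have "\<dots> \<le> wdist G S (\<gamma> i') (\<gamma> i) + (wdist G S (\<gamma> i) (\<eta> j) + wdist G S (\<eta> j) (\<eta> j'))"
    using wdist_tri assms by simp
  finally show ?thesis unfolding gprod_def using assms ray_d1[of \<gamma>] ray_d1[of \<eta>] ray_dist[of \<gamma> i' i]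
      ray_dist[of \<eta> j j'] by simp
qed

lemma asym_trans: assumes "asym G S x y" "asym G S y z" "\<And>i. x i \<in> carrier G" "\<And>i. y i \<in> carrier G"
  "\<And>i. z i \<in> carrier G" shows "asym G S x z"
  unfolding asym_def
proof
  fix M :: real
  obtain N1 where N1: "\<forall>i\<ge>N1. \<forall>j\<ge>N1. gp \<one> (x i) (y j) \<ge> M + \<delta>" using assms(1) unfolding asym_def by blast
  obtain N2 where N2: "\<forall>i\<ge>N2. \<forall>j\<ge>N2. gp \<one> (y i) (z j) \<ge> M + \<delta>" using assms(2) unfolding asym_def by blast
  have "gp \<one> (x i) (z k) \<ge> M" if "i \<ge> max N1 N2" "k \<ge> max N1 N2" for i k
  proof -
    have "gp \<one> (x i) (z k) \<ge> min (gp \<one> (x i) (y (max N1 N2))) (gp \<one> (y (max N1 N2)) (z k)) - \<delta>"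
      using fp assms by simp
    then show ?thesis using N1 N2 that by (smt (verit) max.cobounded1 max.cobounded2 order_trans)
  qed
  then show "\<exists>N. \<forall>i\<ge>N. \<forall>j\<ge>N. M \<le> gp \<one> (x i) (z j)" by blast
qed

lemma asym_sym: assumes "asym G S x y" "\<And>i. x i \<in> carrier G" "\<And>i. y i \<in> carrier G"
  shows "asym G S y x"
  using assms unfolding asym_def by (metis gp_sym)

lemma ray_asym_self: "geod_ray G S \<gamma> \<Longrightarrow> asym G S \<gamma> \<gamma>"
  unfolding asym_def
proof
  fix M :: real assume r: "geod_ray G S \<gamma>"
  obtain N :: nat where "M \<le> N" using real_arch_simple by blast
  then show "\<exists>N. \<forall>i\<ge>N. \<forall>j\<ge>N. M \<le> gp \<one> (\<gamma> i) (\<gamma> j)" using ray_gp[OF r]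
    by (intro exI[of _ N]) (auto simp: min_def)
qed

lemma equiv_asym: assumes r: "geod_ray G S \<gamma>" "geod_ray G S \<eta>" and e: "ray_equiv G S \<gamma> \<eta>"
  shows "asym G S \<gamma> \<eta>"
  unfolding asym_def
proof
  fix M :: real
  obtain K where K: "\<forall>i. \<exists>j. wdist G S (\<gamma> i) (\<eta> j) \<le> K" using e unfolding ray_equiv_def by blast
  obtain N :: nat where N: "M + K + \<delta> \<le> N" using real_arch_simple by blast
  have "gp \<one> (\<gamma> i) (\<eta> j) \<ge> M" if "i \<ge> N" "j \<ge> N" for i j
  proof -
    obtain j' where j': "wdist G S (\<gamma> i) (\<eta> j') \<le> K" using K by blast
    have a: "gp \<one> (\<gamma> i) (\<eta> j') \<ge> i - K" using gp_ge[of \<one> "\<gamma> i" "\<eta> j'"] r j' ray_d1[OF r(1)] by simp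
    have "wdist G S \<one> (\<gamma> i) \<le> wdist G S \<one> (\<eta> j') + wdist G S (\<gamma> i) (\<eta> j')"
      using wdist_tri[of \<one> "\<eta> j'" "\<gamma> i"] wdist_sym[of "\<gamma> i" "\<eta> j'"] r by simp
    then have jj: "real j' \<ge> i - K" using ray_d1'[OF r(1)] ray_d1'[OF r(2)] j' by simp
    have b: "gp \<one> (\<eta> j') (\<eta> j) \<ge> min (i - K) j" using ray_gp[OF r(2), of j' j] jj by (simp add: min_def)
    have "gp \<one> (\<gamma> i) (\<eta> j) \<ge> min (gp \<one> (\<gamma> i) (\<eta> j')) (gp \<one> (\<eta> j') (\<eta> j)) - \<delta>"
      using fp r by simp
    moreover have "real N \<le> i" "real N \<le> j" using that by simp_all
    moreover have "0 \<le> K" using j' wdist_nonneg order_trans by blast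
    ultimately show ?thesis using a b N d0 by (smt (verit))
  qed
  then show "\<exists>N. \<forall>i\<ge>N. \<forall>j\<ge>N. M \<le> gp \<one> (\<gamma> i) (\<eta> j)" by blast
qed

lemma asym_close: assumes r: "geod_ray G S \<gamma>" "geod_ray G S \<eta>" and a: "asym G S \<gamma> \<eta>"
  shows "wdist G S (\<gamma> i) (\<eta> i) \<le> 4 * \<delta>"
proof -
  obtain N where N: "\<forall>k\<ge>N. \<forall>l\<ge>N. gp \<one> (\<gamma> k) (\<eta> l) \<ge> real i" using a unfolding asym_def by blast
  define k where "k = max N i"
  have "gp \<one> (\<gamma> i) (\<eta> i) \<ge> min (gp \<one> (\<gamma> i) (\<gamma> k)) (min (gp \<one> (\<gamma> k) (\<eta> k)) (gp \<one> (\<eta> k) (\<eta> i))) - 2 * \<delta>"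
    using fp2 r by simp
  moreover have "gp \<one> (\<gamma> i) (\<gamma> k) = i" "gp \<one> (\<eta> k) (\<eta> i) = i" using ray_gp r k_def by auto
  moreover have "gp \<one> (\<gamma> k) (\<eta> k) \<ge> i" using N k_def by simp
  ultimately have "gp \<one> (\<gamma> i) (\<eta> i) \<ge> i - 2 * \<delta>" by simp
  then show ?thesis unfolding gprod_def using ray_d1[OF r(1)] ray_d1[OF r(2)] by simp
qed

lemma asym_equiv: assumes r: "geod_ray G S \<gamma>" "geod_ray G S \<eta>" and a: "asym G S \<gamma> \<eta>"
  shows "ray_equiv G S \<gamma> \<eta>"
  unfolding ray_equiv_def using asym_close[OF assms] by blast

lemma unb_asym: assumes r: "geod_ray G S \<gamma>" "geod_ray G S \<eta>"
  and u: "\<forall>M. \<exists>i j. gp \<one> (\<gamma> i) (\<eta> j) \<ge> M" shows "asym G S \<gamma> \<eta>"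
  unfolding asym_def
proof
  fix M :: real
  obtain i j where "gp \<one> (\<gamma> i) (\<eta> j) \<ge> M" using u by blast
  then have "\<forall>k\<ge>max i j. \<forall>l\<ge>max i j. M \<le> gp \<one> (\<gamma> k) (\<eta> l)"
    using ray_mono[OF r] by (meson max.boundedE order_trans)
  then show "\<exists>N. \<forall>k\<ge>N. \<forall>l\<ge>N. M \<le> gp \<one> (\<gamma> k) (\<eta> l)" by blast
qed

lemma cls_in: "geod_ray G S \<gamma> \<Longrightarrow> \<gamma> \<in> cls G S \<gamma>"
proof -
  assume r: "geod_ray G S \<gamma>"
  have "ray_equiv G S \<gamma> \<gamma>" unfolding ray_equiv_def
  proof (rule exI[of _ 0], intro conjI allI)
    fix i show "\<exists>j. wdist G S (\<gamma> i) (\<gamma> j) \<le> 0" using r by (intro exI[of _ i]) simp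
  next
    fix i show "\<exists>j. wdist G S (\<gamma> j) (\<gamma> i) \<le> 0" using r by (intro exI[of _ i]) simp
  qed
  then show ?thesis using r unfolding cls_def by simp
qed

lemma gbdry_cls: "gbdry G S = {cls G S \<gamma> | \<gamma>. geod_ray G S \<gamma>}"
  unfolding gbdry_def cls_def by simp

lemma cls_gbdry: "geod_ray G S \<gamma> \<Longrightarrow> cls G S \<gamma> \<in> gbdry G S"
  unfolding gbdry_cls by blast

lemma cls_mem_asym: assumes "\<gamma> \<in> cls G S \<gamma>0" "geod_ray G S \<gamma>0"
  shows "geod_ray G S \<gamma>" "asym G S \<gamma>0 \<gamma>"
  using assms equiv_asym unfolding cls_def by auto

lemma bd_asym: assumes "\<xi> \<in> gbdry G S" "\<gamma> \<in> \<xi>" "\<eta> \<in> \<xi>"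
  shows "asym G S \<gamma> \<eta>" "geod_ray G S \<gamma>"
proof -
  obtain \<gamma>0 where g0: "geod_ray G S \<gamma>0" "\<xi> = cls G S \<gamma>0" using assms(1) unfolding gbdry_cls by blast
  then have "asym G S \<gamma>0 \<gamma>" "asym G S \<gamma>0 \<eta>" "geod_ray G S \<gamma>" "geod_ray G S \<eta>"
    using cls_mem_asym assms by auto
  then show "asym G S \<gamma> \<eta>" "geod_ray G S \<gamma>" using asym_sym asym_trans g0 by (meson ray_car)+
qed

lemma bd_ne: assumes "\<xi> \<in> gbdry G S" shows "\<exists>\<gamma>. \<gamma> \<in> \<xi>"
  using assms cls_in unfolding gbdry_cls by blast

lemma bd_eq: assumes "\<xi> \<in> gbdry G S" "\<eta> \<in> gbdry G S" "\<gamma> \<in> \<xi>" "\<gamma>' \<in> \<eta>" "asym G S \<gamma> \<gamma>'"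
  shows "\<xi> = \<eta>"
proof -
  obtain a where a: "geod_ray G S a" "\<xi> = cls G S a" using assms(1) unfolding gbdry_cls by blast
  obtain b where b: "geod_ray G S b" "\<eta> = cls G S b" using assms(2) unfolding gbdry_cls by blast
  have rg: "geod_ray G S \<gamma>" "geod_ray G S \<gamma>'" using bd_asym assms by blast+
  have "asym G S a \<gamma>" using cls_mem_asym a assms by auto
  then have ab: "asym G S a b"
    using asym_trans[OF _ assms(5)] asym_trans asym_sym cls_mem_asym[of \<gamma>' b] b assms a rg
    by (meson ray_car)
  have "cls G S a \<subseteq> cls G S b" "cls G S b \<subseteq> cls G S a"
  proof -
    show "cls G S a \<subseteq> cls G S b"
    proof
      fix x assume "x \<in> cls G S a"
      then have x: "geod_ray G S x" "asym G S a x" using cls_mem_asym a by auto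
      then have "asym G S b x" using asym_trans[OF asym_sym[OF ab]] a b by (meson ray_car)
      then show "x \<in> cls G S b" using asym_equiv x b unfolding cls_def by auto
    qed
    show "cls G S b \<subseteq> cls G S a"
    proof
      fix x assume "x \<in> cls G S b"
      then have x: "geod_ray G S x" "asym G S b x" using cls_mem_asym b by auto
      then have "asym G S a x" using asym_trans[OF ab] a b by (meson ray_car)
      then show "x \<in> cls G S a" using asym_equiv x a unfolding cls_def by auto
    qed
  qed
  then show ?thesis using a b by auto
qed


lemma seq_to_iff: "seq_to G S x \<xi> \<longleftrightarrow> (\<forall>i. x i \<in> carrier G) \<and> (\<exists>\<gamma>\<in>\<xi>. asym G S x \<gamma>)"
  unfolding seq_to_def asym_def by simp

lemma gbd_lower: assumes "\<xi> \<in> gbdry G S" "\<eta> \<in> gbdry G S" "\<gamma> \<in> \<xi>" "\<gamma>' \<in> \<eta>" "p \<in> carrier G"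
  and m: "gp \<one> (\<gamma> i0) (\<gamma>' j0) \<ge> m"
  shows "gprod_bd G S p \<xi> \<eta> \<ge> ereal (m - wdist G S p \<one>)"
proof -
  have r: "geod_ray G S \<gamma>" "geod_ray G S \<gamma>'" using bd_asym assms by blast+
  have "seq_to G S \<gamma> \<xi>" "seq_to G S \<gamma>' \<eta>" unfolding seq_to_iff using r ray_asym_self assms by auto
  then have mem: "(\<gamma>, \<gamma>') \<in> {(x, y). seq_to G S x \<xi> \<and> seq_to G S y \<eta>}" by simp
  have "ereal (m - wdist G S p \<one>) \<le> (INF i \<in> {max i0 j0..}. INF j \<in> {max i0 j0..}. ereal (gp p (\<gamma> i) (\<gamma>' j)))"
  proof (intro INF_greatest)
    fix i j assume ij: "i \<in> {max i0 j0..}" "j \<in> {max i0 j0..}"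
    have "gp \<one> (\<gamma> i) (\<gamma>' j) \<ge> m" using ray_mono[OF r, of i0 i j0 j] ij m by simp
    moreover have "\<bar>gp p (\<gamma> i) (\<gamma>' j) - gp \<one> (\<gamma> i) (\<gamma>' j)\<bar> \<le> wdist G S p \<one>"
      using gp_base assms r by simp
    ultimately show "ereal (m - wdist G S p \<one>) \<le> ereal (gp p (\<gamma> i) (\<gamma>' j))" by simp
  qed
  also have "\<dots> \<le> (SUP N. INF i \<in> {N..}. INF j \<in> {N..}. ereal (gp p (\<gamma> i) (\<gamma>' j)))"
    by (rule SUP_upper) simp
  also have "\<dots> \<le> gprod_bd G S p \<xi> \<eta>" unfolding gprod_bd_def
    using SUP_upper[OF mem, of "\<lambda>xy. SUP N. INF i\<in>{N..}. INF j\<in>{N..}. ereal (gp p (fst xy i) (snd xy j))"]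
    by simp
  finally show ?thesis .
qed

lemma gbd_upper: assumes "\<xi> \<in> gbdry G S" "\<eta> \<in> gbdry G S" "\<gamma> \<in> \<xi>" "\<gamma>' \<in> \<eta>" "p \<in> carrier G"
  and M: "\<forall>i j. gp \<one> (\<gamma> i) (\<gamma>' j) \<le> M"
  shows "gprod_bd G S p \<xi> \<eta> \<le> ereal (M + 2 * \<delta> + wdist G S p \<one>)"
  unfolding gprod_bd_def
proof (rule SUP_least)
  fix xy assume xy: "xy \<in> {(x, y). seq_to G S x \<xi> \<and> seq_to G S y \<eta>}"
  obtain x y where xyd: "xy = (x, y)" by fastforce
  have sx: "seq_to G S x \<xi>" and sy: "seq_to G S y \<eta>" using xy xyd by auto
  have r: "geod_ray G S \<gamma>" "geod_ray G S \<gamma>'" using bd_asym assms by blast+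
  obtain \<beta> where \<beta>: "\<beta> \<in> \<xi>" "asym G S x \<beta>" and xc: "\<And>i. x i \<in> carrier G" using sx unfolding seq_to_iff by blast
  obtain \<beta>' where \<beta>': "\<beta>' \<in> \<eta>" "asym G S y \<beta>'" and yc: "\<And>i. y i \<in> carrier G" using sy unfolding seq_to_iff by blast
  have rb: "geod_ray G S \<beta>" "geod_ray G S \<beta>'" using bd_asym assms \<beta> \<beta>' by blast+
  have ax: "asym G S x \<gamma>" using asym_trans[OF \<beta>(2) bd_asym(1)[OF assms(1) \<beta>(1) assms(3)]] xc rb r by simp
  have ay: "asym G S y \<gamma>'" using asym_trans[OF \<beta>'(2) bd_asym(1)[OF assms(2) \<beta>'(1) assms(4)]] yc rb r by simp
  obtain N1 where N1: "\<forall>i\<ge>N1. \<forall>j\<ge>N1. gp \<one> (x i) (\<gamma> j) \<ge> M + 2 * \<delta> + 1" using ax unfolding asym_def by blast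
  obtain N2 where N2: "\<forall>i\<ge>N2. \<forall>j\<ge>N2. gp \<one> (y i) (\<gamma>' j) \<ge> M + 2 * \<delta> + 1" using ay unfolding asym_def by blast
  define N where "N = max N1 N2"
  have bnd: "gp p (x i) (y j) \<le> M + 2 * \<delta> + wdist G S p \<one>" if "i \<ge> N" "j \<ge> N" for i j
  proof -
    have "gp \<one> (\<gamma> N) (\<gamma>' N) \<ge> min (gp \<one> (\<gamma> N) (x i)) (min (gp \<one> (x i) (y j)) (gp \<one> (y j) (\<gamma>' N))) - 2 * \<delta>"
      using fp2 r xc yc by simp
    moreover have "gp \<one> (\<gamma> N) (x i) \<ge> M + 2 * \<delta> + 1" using N1 that N_def gp_sym[of "\<gamma> N" "x i"] r xc by simp
    moreover have "gp \<one> (y j) (\<gamma>' N) \<ge> M + 2 * \<delta> + 1" using N2 that N_def by simp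
    moreover have "gp \<one> (\<gamma> N) (\<gamma>' N) \<le> M" using M by simp
    ultimately have "gp \<one> (x i) (y j) \<le> M + 2 * \<delta>" by (simp add: min_def split: if_splits)
    moreover have "\<bar>gp p (x i) (y j) - gp \<one> (x i) (y j)\<bar> \<le> wdist G S p \<one>"
      using gp_base assms xc yc by simp
    ultimately show ?thesis by simp
  qed
  have "(SUP N. INF i\<in>{N..}. INF j\<in>{N..}. ereal (gp p (x i) (y j)))
        \<le> ereal (M + 2 * \<delta> + wdist G S p \<one>)"
  proof (intro SUP_least)
    fix N' :: nat
    have "(INF i\<in>{N'..}. INF j\<in>{N'..}. ereal (gp p (x i) (y j))) \<le> (INF j\<in>{N'..}. ereal (gp p (x (max N N')) (y j)))"
      by (rule INF_lower) simp
    also have "\<dots> \<le> ereal (gp p (x (max N N')) (y (max N N')))"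
      by (rule INF_lower) simp
    also have "\<dots> \<le> ereal (M + 2 * \<delta> + wdist G S p \<one>)" using bnd by simp
    finally show "(INF i\<in>{N'..}. INF j\<in>{N'..}. ereal (gp p (x i) (y j))) \<le> ereal (M + 2 * \<delta> + wdist G S p \<one>)" .
  qed
  then show "(SUP N. INF i\<in>{N..}. INF j\<in>{N..}. ereal (gp p (fst xy i) (snd xy j)))
        \<le> ereal (M + 2 * \<delta> + wdist G S p \<one>)" using xyd by simp
qed

lemma gbd_self: assumes "\<xi> \<in> gbdry G S" "p \<in> carrier G"
  shows "gprod_bd G S p \<xi> \<xi> = \<infinity>"
proof -
  obtain \<gamma> where g: "\<gamma> \<in> \<xi>" using bd_ne assms by blast
  have r: "geod_ray G S \<gamma>" using bd_asym assms g by blast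
  have "gprod_bd G S p \<xi> \<xi> \<ge> ereal m" for m :: real
  proof -
    obtain n :: nat where "m + wdist G S p \<one> \<le> n" using real_arch_simple by blast
    then have "gp \<one> (\<gamma> n) (\<gamma> n) \<ge> m + wdist G S p \<one>" using ray_gp[OF r] by simp
    then show ?thesis using gbd_lower[OF assms(1) assms(1) g g assms(2)] by fastforce
  qed
  then show ?thesis by (meson ereal_less_eq(1) ereal_top)
qed

lemma bd_bounded: assumes "\<xi> \<in> gbdry G S" "\<eta> \<in> gbdry G S" "\<gamma> \<in> \<xi>" "\<gamma>' \<in> \<eta>" "\<xi> \<noteq> \<eta>"
  shows "\<exists>M. \<forall>i j. gp \<one> (\<gamma> i) (\<gamma>' j) \<le> M"
proof (rule ccontr)
  assume "\<nexists>M. \<forall>i j. gp \<one> (\<gamma> i) (\<gamma>' j) \<le> M"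
  then have "\<forall>M. \<exists>i j. gp \<one> (\<gamma> i) (\<gamma>' j) \<ge> M" by (meson linorder_not_le order_less_imp_le)
  then have "asym G S \<gamma> \<gamma>'" using unb_asym bd_asym assms by blast
  then show False using bd_eq assms by blast
qed


lemma koenig: assumes bc: "\<And>i. \<beta> i \<in> carrier G" and bd: "\<And>i j. wdist G S (\<beta> i) (\<beta> j) = \<bar>real i - real j\<bar>"
  shows "\<exists>\<gamma>. geod_ray G S \<gamma> \<and> asym G S \<gamma> \<beta>"
proof -
  define ll where "ll m = wdn G S \<one> (\<beta> m)" for m
  define c where "c = wdist G S \<one> (\<beta> 0)"
  have "\<forall>m. \<exists>s. s 0 = \<one> \<and> s (ll m) = \<beta> m \<and> (\<forall>i. s i \<in> carrier G) \<and>
     (\<forall>i. s i = s (min i (ll m))) \<and> (\<forall>i j. i \<le> j \<longrightarrow> j \<le> ll m \<longrightarrow> wdn G S (s i) (s j) = j - i)"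
    unfolding ll_def using geodesic_seg bc by simp
  from choice[OF this] obtain \<sigma> where \<sigma>all: "\<forall>m. \<sigma> m 0 = \<one> \<and> \<sigma> m (ll m) = \<beta> m \<and> (\<forall>i. \<sigma> m i \<in> carrier G) \<and>
     (\<forall>i. \<sigma> m i = \<sigma> m (min i (ll m))) \<and> (\<forall>i j. i \<le> j \<longrightarrow> j \<le> ll m \<longrightarrow> wdn G S (\<sigma> m i) (\<sigma> m j) = j - i)"
    by blast
  have \<sigma>0: "\<And>m. \<sigma> m 0 = \<one>" and \<sigma>l: "\<And>m. \<sigma> m (ll m) = \<beta> m"
    and \<sigma>c: "\<And>m i. \<sigma> m i \<in> carrier G" and \<sigma>min: "\<And>m i. \<sigma> m i = \<sigma> m (min i (ll m))"
    and \<sigma>d: "\<And>m i j. i \<le> j \<Longrightarrow> j \<le> ll m \<Longrightarrow> wdn G S (\<sigma> m i) (\<sigma> m j) = j - i"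
    using \<sigma>all by blast+
  have \<sigma>1: "wdn G S \<one> (\<sigma> m i) \<le> i" for m i
  proof -
    have "wdn G S \<one> (\<sigma> m i) = wdn G S (\<sigma> m 0) (\<sigma> m (min i (ll m)))" using \<sigma>0[of m] \<sigma>min[of m i] by simp
    also have "\<dots> = min i (ll m)" using \<sigma>d[of 0 "min i (ll m)" m] by simp
    finally show ?thesis by simp
  qed
  have llge: "real (ll m) \<ge> m - c" for m
  proof -
    have "wdist G S (\<beta> 0) (\<beta> m) \<le> wdist G S (\<beta> 0) \<one> + wdist G S \<one> (\<beta> m)" using wdist_tri bc by simp
    then show ?thesis using bd[of 0 m] wdist_sym[of "\<beta> 0" \<one>] bc unfolding c_def ll_def wdist_wdn by simp
  qed
  define P where "P xs \<longleftrightarrow> infinite {m. \<forall>i<length xs. \<sigma> m i = xs ! i}" for xs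
  have step: "\<exists>v. P (xs @ [v])" if "P xs" for xs
  proof -
    define I where "I = {m. \<forall>i<length xs. \<sigma> m i = xs ! i}"
    have inf: "infinite I" using that unfolding P_def I_def by simp
    have "(\<lambda>m. \<sigma> m (length xs)) ` I \<subseteq> {y \<in> carrier G. wdn G S \<one> y \<le> length xs}" using \<sigma>1 \<sigma>c by auto
    then have "finite ((\<lambda>m. \<sigma> m (length xs)) ` I)" using ball_finite finite_subset by blast
    then obtain m0 where "m0 \<in> I" "infinite {m \<in> I. \<sigma> m (length xs) = \<sigma> m0 (length xs)}"
      using pigeonhole_infinite[OF inf] by blast
    moreover have "{m \<in> I. \<sigma> m (length xs) = \<sigma> m0 (length xs)} = {m. \<forall>i<length (xs @ [\<sigma> m0 (length xs)]). \<sigma> m i = (xs @ [\<sigma> m0 (length xs)]) ! i}"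
      unfolding I_def by (auto simp: nth_append less_Suc_eq)
    ultimately have "P (xs @ [\<sigma> m0 (length xs)])" unfolding P_def by simp
    then show ?thesis by blast
  qed
  define stp where "stp xs = xs @ [SOME v. P (xs @ [v])]" for xs
  define L where "L k = (stp ^^ k) []" for k
  have LS: "L (Suc k) = L k @ [SOME v. P (L k @ [v])]" for k unfolding L_def stp_def by simp
  have Llen: "length (L k) = k" for k by (induction k) (auto simp: LS, simp add: L_def)
  have LP: "P (L k)" for k
  proof (induction k)
    case 0 then show ?case unfolding P_def L_def by simp
  next
    case (Suc k) then show ?case unfolding LS using step by (metis someI_ex)
  qed
  have Lpre: "L k' ! i = L k ! i" if "i < k" "k \<le> k'" for i k k'
    using that(2)
  proof (induction k' rule: dec_induct)
    case base then show ?case by simp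
  next
    case (step n) then show ?case using that(1) Llen by (simp add: LS nth_append)
  qed
  define \<gamma> where "\<gamma> i = L (Suc i) ! i" for i
  have Linf: "infinite {m. \<forall>i<k. \<sigma> m i = \<gamma> i}" for k
  proof -
    have "{m. \<forall>i<k. \<sigma> m i = \<gamma> i} = {m. \<forall>i<length (L k). \<sigma> m i = L k ! i}"
    proof (intro Collect_cong iffI allI impI)
      fix m i assume "\<forall>i<k. \<sigma> m i = \<gamma> i" "i < length (L k)"
      then show "\<sigma> m i = L k ! i" using Lpre[of i "Suc i" k] Llen unfolding \<gamma>_def by simp
    next
      fix m i assume "\<forall>i<length (L k). \<sigma> m i = L k ! i" "i < k"
      then show "\<sigma> m i = \<gamma> i" using Lpre[of i "Suc i" k] Llen unfolding \<gamma>_def by simp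
    qed
    then show ?thesis using LP unfolding P_def by simp
  qed
  have pick: "\<exists>m. m \<ge> B \<and> (\<forall>i<k. \<sigma> m i = \<gamma> i)" for k B
    using Linf[of k] unfolding infinite_nat_iff_unbounded_le by auto
  have rc: "\<gamma> i \<in> carrier G" for i using pick[of 0 "Suc i"] \<sigma>c by (metis lessI)
  have r0: "\<gamma> 0 = \<one>" using pick[of 0 1] \<sigma>0 by (metis zero_less_one)
  have rd: "wdist G S (\<gamma> i) (\<gamma> j) = \<bar>real i - real j\<bar>" for i j
  proof -
    obtain B :: nat where B: "real (max i j) + c \<le> B" using real_arch_simple by blast
    obtain m where m: "m \<ge> B" "\<forall>k<Suc (max i j). \<sigma> m k = \<gamma> k" using pick by blast
    have "real B \<le> real m" using m(1) by simp
    then have "real (ll m) \<ge> max i j" using llge[of m] B by linarith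
    then have lm: "ll m \<ge> max i j" by linarith
    have gi: "\<gamma> i = \<sigma> m i" "\<gamma> j = \<sigma> m j" using m by auto
    show ?thesis
    proof (cases "i \<le> j")
      case True then show ?thesis using \<sigma>d[of i j m] lm gi unfolding wdist_wdn by simp
    next
      case False
      then have "wdn G S (\<sigma> m j) (\<sigma> m i) = i - j" using \<sigma>d[of j i m] lm by simp
      then show ?thesis using False gi wdn_sym \<sigma>c unfolding wdist_wdn by simp
    qed
  qed
  have ray: "geod_ray G S \<gamma>" unfolding geod_ray_def using r0 rc rd by simp
  have "asym G S \<gamma> \<beta>" unfolding asym_def
  proof
    fix M :: real
    obtain N :: nat where N: "M + c + \<delta> \<le> N" using real_arch_simple by blast
    have "gp \<one> (\<gamma> k) (\<beta> l) \<ge> M" if "k \<ge> N" "l \<ge> N" for k l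
    proof -
      obtain B :: nat where B: "real (max k l) + c \<le> B" using real_arch_simple by blast
      obtain m where m: "m \<ge> B" "\<forall>i<Suc k. \<sigma> m i = \<gamma> i" using pick by blast
      have "real B \<le> real m" using m(1) by simp
      then have "real (ll m) \<ge> max k l" using llge[of m] B by linarith
      then have lm: "ll m \<ge> k" by linarith
      have c0: "c \<ge> 0" unfolding c_def by simp
      have ml: "m \<ge> l" using B m c0 by linarith
      have gk: "\<gamma> k = \<sigma> m k" using m by auto
      have "wdn G S (\<sigma> m k) (\<beta> m) = ll m - k" using \<sigma>d[of k "ll m" m] lm \<sigma>l by simp
      moreover have "wdn G S \<one> (\<sigma> m k) = k" using \<sigma>d[of 0 k m] lm \<sigma>0 by simp
      ultimately have a: "gp \<one> (\<gamma> k) (\<beta> m) = k" unfolding gprod_def wdist_wdn gk ll_def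
        using wdn_sym[of \<one> "\<sigma> m k"] wdn_sym[of \<one> "\<beta> m"] \<sigma>c bc lm[unfolded ll_def] by simp
      have "gp (\<beta> 0) (\<beta> m) (\<beta> l) = l" unfolding gprod_def using bd[of m 0] bd[of l 0] bd[of m l] ml by simp
      moreover have "\<bar>gp (\<beta> 0) (\<beta> m) (\<beta> l) - gp \<one> (\<beta> m) (\<beta> l)\<bar> \<le> c"
        using gp_base[of "\<beta> 0" \<one> "\<beta> m" "\<beta> l"] bc wdist_sym[of "\<beta> 0" \<one>] unfolding c_def by simp
      ultimately have b: "gp \<one> (\<beta> m) (\<beta> l) \<ge> l - c" by simp
      have "gp \<one> (\<gamma> k) (\<beta> l) \<ge> min (gp \<one> (\<gamma> k) (\<beta> m)) (gp \<one> (\<beta> m) (\<beta> l)) - \<delta>"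
        using fp rc bc by simp
      moreover have "real N \<le> k" "real N \<le> l" using that by simp_all
      ultimately show ?thesis using a b N c0 by (simp add: min_def split: if_splits)
    qed
    then show "\<exists>N. \<forall>k\<ge>N. \<forall>l\<ge>N. M \<le> gp \<one> (\<gamma> k) (\<beta> l)" by blast
  qed
  then show ?thesis using ray by blast
qed


definition rep :: "(nat \<Rightarrow> 'a) set \<Rightarrow> nat \<Rightarrow> 'a" where "rep \<xi> = (SOME \<gamma>. \<gamma> \<in> \<xi>)"

lemma rep_in: "\<xi> \<in> gbdry G S \<Longrightarrow> rep \<xi> \<in> \<xi>"
  unfolding rep_def using bd_ne by (metis someI_ex)

lemma rep_ray: "\<xi> \<in> gbdry G S \<Longrightarrow> geod_ray G S (rep \<xi>)"
  using rep_in bd_asym by blast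

definition Fm :: "nat \<Rightarrow> (nat \<Rightarrow> 'a) set \<Rightarrow> (nat \<Rightarrow> 'a) set \<Rightarrow> (nat \<Rightarrow> 'a) set" where
  "Fm t \<xi>0 \<eta> = cls G S (SOME g. geod_ray G S g \<and> asym G S g (\<lambda>k. inv (rep \<xi>0 t) \<otimes> rep \<eta> (t + k)))"

lemma Fm_props: fixes t :: nat assumes "\<xi>0 \<in> gbdry G S" "\<eta> \<in> gbdry G S"
  defines "g \<equiv> (SOME g. geod_ray G S g \<and> asym G S g (\<lambda>k. inv (rep \<xi>0 t) \<otimes> rep \<eta> (t + k)))"
  shows "geod_ray G S g" "asym G S g (\<lambda>k. inv (rep \<xi>0 t) \<otimes> rep \<eta> (t + k))"
    "Fm t \<xi>0 \<eta> = cls G S g" "g \<in> Fm t \<xi>0 \<eta>" "Fm t \<xi>0 \<eta> \<in> gbdry G S"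
proof -
  have r0: "geod_ray G S (rep \<xi>0)" "geod_ray G S (rep \<eta>)" using rep_ray assms by auto
  define h where "h = rep \<xi>0 t"
  have hc: "h \<in> carrier G" "inv h \<in> carrier G" using r0 h_def by auto
  have "\<exists>g. geod_ray G S g \<and> asym G S g (\<lambda>k. inv h \<otimes> rep \<eta> (t + k))"
  proof (rule koenig)
    show "inv h \<otimes> rep \<eta> (t + i) \<in> carrier G" for i using hc r0 by simp
    show "wdist G S (inv h \<otimes> rep \<eta> (t + i)) (inv h \<otimes> rep \<eta> (t + j)) = \<bar>real i - real j\<bar>" for i j
      using wdist_mult[of "inv h"] hc r0 ray_dist[OF r0(2), of "t+i" "t+j"] by simp
  qed
  then have "geod_ray G S g \<and> asym G S g (\<lambda>k. inv (rep \<xi>0 t) \<otimes> rep \<eta> (t + k))"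
    unfolding g_def h_def by (rule someI_ex)
  then show "geod_ray G S g" "asym G S g (\<lambda>k. inv (rep \<xi>0 t) \<otimes> rep \<eta> (t + k))" by auto
  show "Fm t \<xi>0 \<eta> = cls G S g" unfolding Fm_def g_def by simp
  then show "g \<in> Fm t \<xi>0 \<eta>" "Fm t \<xi>0 \<eta> \<in> gbdry G S" using cls_in cls_gbdry \<open>geod_ray G S g\<close> by auto
qed

lemma exp_core: assumes x0: "\<xi>0 \<in> gbdry G S" and e: "\<eta> \<in> gbdry G S" and e': "\<eta>' \<in> gbdry G S"
  and ne: "\<eta> \<noteq> \<eta>'" and p: "p \<in> carrier G"
  and c1: "wdist G S (rep \<eta> t) (rep \<xi>0 t) \<le> 4 * \<delta>" and c2: "wdist G S (rep \<eta>' t) (rep \<xi>0 t) \<le> 4 * \<delta>"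
  shows "\<exists>X. gprod_bd G S p (Fm t \<xi>0 \<eta>) (Fm t \<xi>0 \<eta>') \<le> ereal (X - t + 8 * \<delta> + wdist G S p \<one>)
    \<and> gprod_bd G S p (Fm t \<xi>0 \<eta>) (Fm t \<xi>0 \<eta>') \<ge> ereal (- wdist G S p \<one>)
    \<and> gprod_bd G S p \<eta> \<eta>' \<ge> ereal (X - 1 - wdist G S p \<one>)
    \<and> gprod_bd G S p \<eta> \<eta>' \<le> ereal (X + 2 * \<delta> + wdist G S p \<one>)"
proof -
  define c where "c = wdist G S p \<one>"
  define h where "h = rep \<xi>0 t"
  define \<gamma> where "\<gamma> = rep \<eta>"
  define \<gamma>' where "\<gamma>' = rep \<eta>'"
  have r: "geod_ray G S \<gamma>" "geod_ray G S \<gamma>'" "geod_ray G S (rep \<xi>0)" using rep_ray assms \<gamma>_def \<gamma>'_def by auto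
  have hc: "h \<in> carrier G" "inv h \<in> carrier G" using r h_def by auto
  have gi: "\<gamma> \<in> \<eta>" "\<gamma>' \<in> \<eta>'" using rep_in e e' \<gamma>_def \<gamma>'_def by auto
  obtain M0 where M0: "\<forall>i j. gp \<one> (\<gamma> i) (\<gamma>' j) \<le> M0" using bd_bounded[OF e e' gi ne] by blast
  define V where "V = {gp \<one> (\<gamma> i) (\<gamma>' j) | i j. True}"
  have Vb: "bdd_above V" "V \<noteq> {}" unfolding V_def bdd_above_def using M0 by auto
  define X where "X = Sup V"
  have Xup: "gp \<one> (\<gamma> i) (\<gamma>' j) \<le> X" for i j unfolding X_def by (rule cSup_upper) (use Vb V_def in auto)
  obtain i0 j0 where ij0: "gp \<one> (\<gamma> i0) (\<gamma>' j0) > X - 1"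
  proof -
    have "X - 1 < Sup V" unfolding X_def by simp
    then obtain v where "v \<in> V" "X - 1 < v" using less_cSup_iff[OF Vb(2) Vb(1)] by blast
    then show ?thesis using that unfolding V_def by blast
  qed
  define g where "g = (SOME g. geod_ray G S g \<and> asym G S g (\<lambda>k. inv (rep \<xi>0 t) \<otimes> rep \<eta> (t + k)))"
  define g' where "g' = (SOME g. geod_ray G S g \<and> asym G S g (\<lambda>k. inv (rep \<xi>0 t) \<otimes> rep \<eta>' (t + k)))"
  note F1 = Fm_props[OF x0 e, of t, folded g_def]
  note F2 = Fm_props[OF x0 e', of t, folded g'_def]
  define \<beta> where "\<beta> k = inv h \<otimes> \<gamma> (t + k)" for k
  define \<beta>' where "\<beta>' k = inv h \<otimes> \<gamma>' (t + k)" for k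
  have a1: "asym G S g \<beta>" "asym G S g' \<beta>'" using F1(2) F2(2) unfolding \<beta>_def \<beta>'_def h_def \<gamma>_def \<gamma>'_def by auto
  have bc: "\<beta> k \<in> carrier G" "\<beta>' k \<in> carrier G" for k unfolding \<beta>_def \<beta>'_def using hc r by auto
  have gbeta: "gp \<one> (\<beta> Q) (\<beta>' Q) \<le> X - t + 4 * \<delta>" for Q
  proof -
    have "gp \<one> (\<beta> Q) (\<beta>' Q) = gp (inv h \<otimes> h) (inv h \<otimes> \<gamma> (t + Q)) (inv h \<otimes> \<gamma>' (t + Q))"
      unfolding \<beta>_def \<beta>'_def using hc by simp
    also have "\<dots> = gp h (\<gamma> (t + Q)) (\<gamma>' (t + Q))" using gp_mult[of "inv h" h "\<gamma> (t + Q)" "\<gamma>' (t + Q)"] hc r by simp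
    also have "\<dots> \<le> gp \<one> (\<gamma> (t + Q)) (\<gamma>' (t + Q)) - t + 4 * \<delta>"
    proof -
      have "wdist G S (\<gamma> (t + Q)) h \<le> wdist G S (\<gamma> (t + Q)) (\<gamma> t) + wdist G S (\<gamma> t) h"
        using wdist_tri r hc by simp
      moreover have "wdist G S (\<gamma>' (t + Q)) h \<le> wdist G S (\<gamma>' (t + Q)) (\<gamma>' t) + wdist G S (\<gamma>' t) h"
        using wdist_tri r hc by simp
      moreover have "wdist G S (\<gamma> (t + Q)) (\<gamma> t) = Q" "wdist G S (\<gamma>' (t + Q)) (\<gamma>' t) = Q"
        using ray_dist r by auto
      moreover have "wdist G S (\<gamma> (t + Q)) \<one> = t + Q" "wdist G S (\<gamma>' (t + Q)) \<one> = t + Q"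
        using ray_d1 r by auto
      ultimately show ?thesis using c1 c2 unfolding gprod_def h_def \<gamma>_def \<gamma>'_def by (simp add: field_simps; linarith)
    qed
    also have "\<dots> \<le> X - t + 4 * \<delta>" using Xup by simp
    finally show ?thesis .
  qed
  have gup: "gp \<one> (g k) (g' l) \<le> X - t + 6 * \<delta>" for k l
  proof (rule ccontr)
    assume "\<not> ?thesis"
    then have big: "gp \<one> (g k) (g' l) > X - t + 6 * \<delta>" by simp
    obtain N1 where N1: "\<forall>i\<ge>N1. \<forall>j\<ge>N1. gp \<one> (g i) (\<beta> j) \<ge> X - t + 8 * \<delta> + 1" using a1(1) unfolding asym_def by blast
    obtain N2 where N2: "\<forall>i\<ge>N2. \<forall>j\<ge>N2. gp \<one> (g' i) (\<beta>' j) \<ge> X - t + 8 * \<delta> + 1" using a1(2) unfolding asym_def by blast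
    define Q where "Q = max (max k l) (max N1 N2)"
    have "gp \<one> (g Q) (g' Q) \<ge> gp \<one> (g k) (g' l)" using ray_mono[OF F1(1) F2(1)] Q_def by simp
    moreover have "gp \<one> (\<beta> Q) (\<beta>' Q) \<ge> min (gp \<one> (\<beta> Q) (g Q)) (min (gp \<one> (g Q) (g' Q)) (gp \<one> (g' Q) (\<beta>' Q))) - 2 * \<delta>"
      using fp2 bc F1(1) F2(1) by simp
    moreover have "gp \<one> (\<beta> Q) (g Q) \<ge> X - t + 8 * \<delta> + 1" using N1 Q_def gp_sym[of "\<beta> Q" "g Q"] bc F1(1) by simp
    moreover have "gp \<one> (g' Q) (\<beta>' Q) \<ge> X - t + 8 * \<delta> + 1" using N2 Q_def by simp
    ultimately have "gp \<one> (\<beta> Q) (\<beta>' Q) > X - t + 4 * \<delta>" using big d0 by (simp add: min_def split: if_splits)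
    then show False using gbeta[of Q] by simp
  qed
  have u1: "gprod_bd G S p (Fm t \<xi>0 \<eta>) (Fm t \<xi>0 \<eta>') \<le> ereal (X - t + 8 * \<delta> + c)"
    using gbd_upper[OF F1(5) F2(5) F1(4) F2(4) p, of "X - t + 6 * \<delta>"] gup unfolding c_def by (simp add: algebra_simps)
  have l1: "gprod_bd G S p (Fm t \<xi>0 \<eta>) (Fm t \<xi>0 \<eta>') \<ge> ereal (- c)"
  proof -
    have "gp \<one> (g 0) (g' 0) \<ge> 0" using ray0[OF F1(1)] ray0[OF F2(1)] by (simp add: gprod_def)
    then show ?thesis using gbd_lower[OF F1(5) F2(5) F1(4) F2(4) p, of 0 0 0] unfolding c_def by simp
  qed
  have l2: "gprod_bd G S p \<eta> \<eta>' \<ge> ereal (X - 1 - c)"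
    using gbd_lower[OF e e' gi p, of "X - 1" i0 j0] ij0 unfolding c_def by simp
  have u2: "gprod_bd G S p \<eta> \<eta>' \<le> ereal (X + 2 * \<delta> + c)"
    using gbd_upper[OF e e' gi p, of X] Xup unfolding c_def by simp
  show ?thesis using u1 l1 l2 u2 unfolding c_def by blast
qed

end

lemma powr_arith: fixes a C1 C2 c \<delta> X vF vE D1 D2 :: real and t :: nat
  assumes a: "a > 1" and C: "C1 > 0" "C2 > 0"
  and t: "a ^ t \<ge> 2 * C2 / C1 * a powr (1 + 2 * c + 8 * \<delta>)"
  and vF: "vF \<le> X - t + 8 * \<delta> + c" and vE: "vE \<ge> X - 1 - c"
  and D1: "D1 \<ge> C1 * a powr (- vF)" and D2: "D2 \<le> C2 * a powr (- vE)"
  shows "D1 \<ge> 2 * D2"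
proof -
  have at: "a powr real t = a ^ t" using a by (simp add: powr_realpow)
  have "2 * C2 * a powr (- vE) \<le> 2 * C2 * a powr (1 + c - X)"
    using vE a C by (intro mult_left_mono powr_mono) auto
  also have "2 * C2 * a powr (1 + c - X) = C1 * (2 * C2 / C1 * a powr (1 + 2 * c + 8 * \<delta>)) * a powr (- X - 8 * \<delta> - c)"
  proof -
    have "1 + c - X = (1 + 2 * c + 8 * \<delta>) + (- X - 8 * \<delta> - c)" by simp
    then have e: "a powr (1 + c - X) = a powr (1 + 2 * c + 8 * \<delta>) * a powr (- X - 8 * \<delta> - c)"
      by (simp only: powr_add)
    show ?thesis unfolding e using C by simp
  qed
  also have "\<dots> \<le> C1 * a ^ t * a powr (- X - 8 * \<delta> - c)"
    using t C by (intro mult_right_mono mult_left_mono) auto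
  also have "C1 * a ^ t * a powr (- X - 8 * \<delta> - c) = C1 * a powr (real t - X - 8 * \<delta> - c)"
  proof -
    have "real t - X - 8 * \<delta> - c = real t + (- X - 8 * \<delta> - c)" by simp
    then have "a powr (real t - X - 8 * \<delta> - c) = a powr real t * a powr (- X - 8 * \<delta> - c)"
      by (simp only: powr_add)
    then show ?thesis using at by simp
  qed
  also have "\<dots> \<le> C1 * a powr (- vF)"
    using vF a C by (intro mult_left_mono powr_mono) auto
  finally show ?thesis using D1 D2 by linarith
qed

lemma ereal_sand: "ereal lo \<le> e \<Longrightarrow> e \<le> ereal hi \<Longrightarrow> e = ereal (real_of_ereal e) \<and> lo \<le> real_of_ereal e \<and> real_of_ereal e \<le> hi"
  by (cases e) auto

locale vis = hypd +
  fixes p :: 'a and a C1 C2 :: real and d :: "(nat \<Rightarrow> 'a) set \<Rightarrow> (nat \<Rightarrow> 'a) set \<Rightarrow> real"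
  assumes p: "p \<in> carrier G" and a: "a > 1" and C1: "C1 > 0" and C2: "C2 > 0"
  and ms: "Metric_space (gbdry G S) d"
  and vlow: "\<And>x y. x \<in> gbdry G S \<Longrightarrow> y \<in> gbdry G S \<Longrightarrow> x \<noteq> y \<Longrightarrow>
      C1 * a powr (- real_of_ereal (gprod_bd G S p x y)) \<le> d x y"
  and vup: "\<And>x y. x \<in> gbdry G S \<Longrightarrow> y \<in> gbdry G S \<Longrightarrow> x \<noteq> y \<Longrightarrow>
      d x y \<le> C2 * a powr (- real_of_ereal (gprod_bd G S p x y))"
begin

interpretation M: Metric_space "gbdry G S" d by (rule ms)

lemma gbd_fin: assumes "\<xi> \<in> gbdry G S" "\<eta> \<in> gbdry G S" "\<xi> \<noteq> \<eta>"
  shows "\<exists>hi. gprod_bd G S p \<xi> \<eta> \<le> ereal hi" "gprod_bd G S p \<xi> \<eta> \<ge> ereal (- wdist G S p \<one>)"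
proof -
  have gi: "rep \<xi> \<in> \<xi>" "rep \<eta> \<in> \<eta>" using rep_in assms by auto
  obtain M0 where "\<forall>i j. gp \<one> (rep \<xi> i) (rep \<eta> j) \<le> M0" using bd_bounded[OF assms(1,2) gi assms(3)] by blast
  then show "\<exists>hi. gprod_bd G S p \<xi> \<eta> \<le> ereal hi" using gbd_upper[OF assms(1,2) gi p] by blast
  have "gp \<one> (rep \<xi> 0) (rep \<eta> 0) \<ge> 0" using ray0[OF rep_ray[OF assms(1)]] ray0[OF rep_ray[OF assms(2)]] by (simp add: gprod_def)
  then show "gprod_bd G S p \<xi> \<eta> \<ge> ereal (- wdist G S p \<one>)" using gbd_lower[OF assms(1,2) gi p, of 0 0 0] by simp
qed

lemma close: fixes t :: nat assumes x0: "\<xi>0 \<in> gbdry G S" and e: "\<eta> \<in> gbdry G S"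
  and dl: "d \<xi>0 \<eta> < C1 * a powr (- (t + 2 * \<delta> + wdist G S p \<one>))"
  shows "wdist G S (rep \<eta> t) (rep \<xi>0 t) \<le> 4 * \<delta>"
proof (cases "\<xi>0 = \<eta>")
  case True then show ?thesis using rep_ray e d0 by simp
next
  case False
  define c where "c = wdist G S p \<one>"
  define R where "R = t + 2 * \<delta> + c"
  define \<gamma>0 where "\<gamma>0 = rep \<xi>0"
  define \<gamma> where "\<gamma> = rep \<eta>"
  have r: "geod_ray G S \<gamma>0" "geod_ray G S \<gamma>" using rep_ray x0 e \<gamma>0_def \<gamma>_def by auto
  have gi: "\<gamma>0 \<in> \<xi>0" "\<gamma> \<in> \<eta>" using rep_in x0 e \<gamma>0_def \<gamma>_def by auto
  obtain hi where hi: "gprod_bd G S p \<xi>0 \<eta> \<le> ereal hi" using gbd_fin[OF x0 e False] by blast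
  define v where "v = real_of_ereal (gprod_bd G S p \<xi>0 \<eta>)"
  have ev: "gprod_bd G S p \<xi>0 \<eta> = ereal v" using ereal_sand[OF gbd_fin(2)[OF x0 e False] hi] v_def by simp
  have "C1 * a powr (- v) < C1 * a powr (- R)" using vlow[OF x0 e False] dl unfolding v_def R_def c_def by simp
  then have "a powr (- v) < a powr (- R)" using C1 by simp
  then have vR: "v > R" using a by simp
  have "\<not> (\<forall>i j. gp \<one> (\<gamma>0 i) (\<gamma> j) \<le> t)"
  proof
    assume "\<forall>i j. gp \<one> (\<gamma>0 i) (\<gamma> j) \<le> t"
    then have "gprod_bd G S p \<xi>0 \<eta> \<le> ereal (t + 2 * \<delta> + c)" using gbd_upper[OF x0 e gi p] c_def by blast
    then show False using ev vR R_def by simp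
  qed
  then obtain i j where ij: "gp \<one> (\<gamma>0 i) (\<gamma> j) > t" using not_le by blast
  define i' where "i' = max i t"
  define j' where "j' = max j t"
  have "gp \<one> (\<gamma>0 t) (\<gamma> t) \<ge> min (gp \<one> (\<gamma>0 t) (\<gamma>0 i')) (min (gp \<one> (\<gamma>0 i') (\<gamma> j')) (gp \<one> (\<gamma> j') (\<gamma> t))) - 2 * \<delta>"
    using fp2 r by simp
  moreover have "gp \<one> (\<gamma>0 t) (\<gamma>0 i') = t" "gp \<one> (\<gamma> j') (\<gamma> t) = t" using ray_gp r i'_def j'_def by auto
  moreover have "gp \<one> (\<gamma>0 i') (\<gamma> j') \<ge> gp \<one> (\<gamma>0 i) (\<gamma> j)" using ray_mono[OF r] i'_def j'_def by simp
  ultimately have "gp \<one> (\<gamma>0 t) (\<gamma> t) \<ge> t - 2 * \<delta>" using ij by (simp add: min_def split: if_splits)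
  then have "wdist G S (\<gamma>0 t) (\<gamma> t) \<le> 4 * \<delta>" unfolding gprod_def using ray_d1 r by simp
  then show ?thesis using wdist_sym r \<gamma>0_def \<gamma>_def by (metis ray_car)
qed


end
context vis begin
interpretation M: Metric_space "gbdry G S" d by (rule ms)
lemma main: "\<exists>(N::nat) U f L. (\<Union>i<N. U i) = gbdry G S \<and>
     (\<forall>i<N. openin (Metric_space.mtopology (gbdry G S) d) (U i) \<and>
            f i ` U i \<subseteq> gbdry G S \<and> (L i :: real) > 1 \<and>
            (\<forall>x\<in>U i. \<forall>y\<in>U i. d (f i x) (f i y) \<ge> L i * d x y))"
proof -
  define c where "c = wdist G S p \<one>"
  obtain t :: nat where t: "2 * C2 / C1 * a powr (1 + 2 * c + 8 * \<delta>) < a ^ t" using real_arch_pow[OF a] by auto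
  define r where "r = C1 * a powr (- (t + 2 * \<delta> + c))"
  have r0: "r > 0" unfolding r_def using C1 a by simp
  obtain n :: nat where n: "C2 * a powr c / r < a ^ n" using real_arch_pow[OF a] by auto
  have an: "a powr real n = a ^ n" using a by (simp add: powr_realpow)
  have nr: "C2 * a powr (- (real n - c)) < r"
  proof -
    have "- (real n - c) = c - real n" by simp
    then have "a powr (- (real n - c)) = a powr c / a powr real n"
      by (simp only: powr_diff)
    then have "C2 * a powr (- (real n - c)) = C2 * a powr c / a ^ n" using an by simp
    also have "\<dots> < r" using n r0 a by (simp add: divide_less_eq mult.commute)
    finally show ?thesis .
  qed
  define B where "B = gbdry G S"
  define Gs where "Gs = (\<lambda>\<eta>. rep \<eta> n) ` B"
  have "Gs \<subseteq> {y \<in> carrier G. wdn G S \<one> y \<le> n}"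
  proof
    fix y assume "y \<in> Gs"
    then obtain \<eta> where eB: "\<eta> \<in> B" and yd: "y = rep \<eta> n" unfolding Gs_def by blast
    have r: "geod_ray G S (rep \<eta>)" using rep_ray eB B_def by simp
    then have "wdist G S \<one> (rep \<eta> n) = n" by (rule ray_d1')
    then have "wdn G S \<one> (rep \<eta> n) = n" by (simp add: wdist_wdn)
    then show "y \<in> {y \<in> carrier G. wdn G S \<one> y \<le> n}" using r yd by simp
  qed
  then have Gfin: "finite Gs" by (rule finite_subset[OF _ ball_finite])
  define ctr where "ctr g = (SOME \<eta>. \<eta> \<in> B \<and> rep \<eta> n = g)" for g
  have ctr: "ctr g \<in> B \<and> rep (ctr g) n = g" if "g \<in> Gs" for g
  proof -
    have "\<exists>\<eta>. \<eta> \<in> B \<and> rep \<eta> n = g" using that unfolding Gs_def by blast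
    then show ?thesis unfolding ctr_def by (rule someI_ex)
  qed
  from finite_list[OF finite_imageI[OF Gfin, of ctr]] obtain xs where xs: "set xs = ctr ` Gs" by (elim exE)
  have xsB: "xs ! i \<in> B" if "i < length xs" for i
  proof -
    have "xs ! i \<in> ctr ` Gs" using nth_mem[OF that] xs by simp
    then obtain g where "g \<in> Gs" "xs ! i = ctr g" by blast
    then show ?thesis using ctr by simp
  qed
  define U where "U i = M.mball (xs ! i) r" for i
  define f where "f i = Fm t (xs ! i)" for i
  define L where "L (i::nat) = (2::real)" for i
  have cover: "(\<Union>i<length xs. U i) = B"
  proof
    show "(\<Union>i<length xs. U i) \<subseteq> B" unfolding U_def B_def by auto
    show "B \<subseteq> (\<Union>i<length xs. U i)"
    proof
      fix \<eta> assume e: "\<eta> \<in> B"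
      define g where "g = rep \<eta> n"
      have gG: "g \<in> Gs" unfolding Gs_def g_def using e by blast
      define \<xi> where "\<xi> = ctr g"
      have xi: "\<xi> \<in> B" "rep \<xi> n = g" using ctr[OF gG] \<xi>_def by auto
      obtain i where i: "i < length xs" "xs ! i = \<xi>" using xs gG \<xi>_def by (metis imageI in_set_conv_nth)
      have "d \<xi> \<eta> < r"
      proof (cases "\<xi> = \<eta>")
        case True then show ?thesis using r0 e B_def by simp
      next
        case False
        have eB: "\<eta> \<in> gbdry G S" "\<xi> \<in> gbdry G S" using e xi B_def by auto
        have gi: "rep \<xi> \<in> \<xi>" "rep \<eta> \<in> \<eta>" using rep_in eB by auto
        have gc: "g \<in> carrier G" using rep_ray eB g_def by simp
        have "gp \<one> (rep \<xi> n) (rep \<eta> n) = n"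
          using xi g_def ray_d1[OF rep_ray[OF eB(1)], of n] gc by (simp add: gprod_def)
        then have lo: "gprod_bd G S p \<xi> \<eta> \<ge> ereal (n - c)"
          using gbd_lower[OF eB(2) eB(1) gi p, of n n n] c_def by simp
        obtain hi where hi: "gprod_bd G S p \<xi> \<eta> \<le> ereal hi" using gbd_fin[OF eB(2) eB(1) False] by blast
        have v: "real_of_ereal (gprod_bd G S p \<xi> \<eta>) \<ge> n - c" using ereal_sand[OF lo hi] by simp
        have "d \<xi> \<eta> \<le> C2 * a powr (- real_of_ereal (gprod_bd G S p \<xi> \<eta>))" using vup eB False by simp
        also have "\<dots> \<le> C2 * a powr (- (real n - c))" using v a C2 by (intro mult_left_mono powr_mono) auto
        finally show ?thesis using nr by simp
      qed
      then have "\<eta> \<in> U i" unfolding U_def using i xi e B_def by simp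
      then show "\<eta> \<in> (\<Union>i<length xs. U i)" using i by blast
    qed
  qed
  have exp: "d (f i x) (f i y) \<ge> L i * d x y" if i: "i < length xs" and x: "x \<in> U i" and y: "y \<in> U i" for i x y
  proof -
    define \<xi>0 where "\<xi>0 = xs ! i"
    have x0: "\<xi>0 \<in> gbdry G S" using xsB i \<xi>0_def B_def by simp
    have xB: "x \<in> gbdry G S" "d \<xi>0 x < r" and yB: "y \<in> gbdry G S" "d \<xi>0 y < r"
      using x y unfolding U_def \<xi>0_def by auto
    have cx: "wdist G S (rep x t) (rep \<xi>0 t) \<le> 4 * \<delta>" using close[OF x0 xB(1)] xB(2) r_def c_def by simp
    have cy: "wdist G S (rep y t) (rep \<xi>0 t) \<le> 4 * \<delta>" using close[OF x0 yB(1)] yB(2) r_def c_def by simp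
    show ?thesis
    proof (cases "x = y")
      case True
      have "Fm t \<xi>0 x \<in> gbdry G S" using Fm_props(5)[OF x0 xB(1)] by simp
      then show ?thesis using True xB L_def f_def \<xi>0_def by simp
    next
      case False
      obtain X :: real where X: "gprod_bd G S p (Fm t \<xi>0 x) (Fm t \<xi>0 y) \<le> ereal (X - t + 8 * \<delta> + c)"
        "gprod_bd G S p (Fm t \<xi>0 x) (Fm t \<xi>0 y) \<ge> ereal (- c)"
        "gprod_bd G S p x y \<ge> ereal (X - 1 - c)" "gprod_bd G S p x y \<le> ereal (X + 2 * \<delta> + c)"
        using exp_core[OF x0 xB(1) yB(1) False p cx cy] c_def by blast
      have Fx: "Fm t \<xi>0 x \<in> gbdry G S" "Fm t \<xi>0 y \<in> gbdry G S" using Fm_props(5) x0 xB yB by auto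
      have Fne: "Fm t \<xi>0 x \<noteq> Fm t \<xi>0 y"
      proof
        assume "Fm t \<xi>0 x = Fm t \<xi>0 y"
        then show False using gbd_self[OF Fx(1) p] X(1) by simp
      qed
      have sF: "real_of_ereal (gprod_bd G S p (Fm t \<xi>0 x) (Fm t \<xi>0 y)) \<le> X - t + 8 * \<delta> + c"
        using ereal_sand[OF X(2) X(1)] by simp
      have sE: "real_of_ereal (gprod_bd G S p x y) \<ge> X - 1 - c"
        using ereal_sand[OF X(3) X(4)] by simp
      have "d (Fm t \<xi>0 x) (Fm t \<xi>0 y) \<ge> 2 * d x y"
        by (rule powr_arith[OF a C1 C2 _ sF sE vlow[OF Fx Fne] vup[OF xB(1) yB(1) False]])
           (use t in simp)
      then show ?thesis using L_def f_def \<xi>0_def by simp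
    qed
  qed
  have "\<forall>i<length xs. openin M.mtopology (U i) \<and> f i ` U i \<subseteq> gbdry G S \<and> L i > 1 \<and>
        (\<forall>x\<in>U i. \<forall>y\<in>U i. d (f i x) (f i y) \<ge> L i * d x y)"
  proof (intro allI impI conjI)
    fix i assume i: "i < length xs"
    show "openin M.mtopology (U i)" unfolding U_def by (rule M.openin_mball)
    show "f i ` U i \<subseteq> gbdry G S"
    proof
      fix z assume "z \<in> f i ` U i"
      then obtain x where x: "x \<in> U i" "z = f i x" by blast
      have "x \<in> gbdry G S" using x(1) unfolding U_def by simp
      then show "z \<in> gbdry G S" using Fm_props(5)[OF xsB[OF i, unfolded B_def]] x(2) f_def by simp
    qed
    show "L i > 1" by (simp add: L_def)
    show "\<forall>x\<in>U i. \<forall>y\<in>U i. d (f i x) (f i y) \<ge> L i * d x y" using exp i by blast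
  qed
  then show ?thesis using cover unfolding B_def by blast
qed

end

theorem theorem6p6:
  fixes G :: "('a, 'b) monoid_scheme" and S :: "'a set"
    and d :: "(nat \<Rightarrow> 'a) set \<Rightarrow> (nat \<Rightarrow> 'a) set \<Rightarrow> real"
  assumes "group G" and "fin_sym_gen G S" and "cayley_hyperbolic G S"
    and "visual_metric G S d"
  shows "\<exists>(N::nat) U f L. (\<Union>i<N. U i) = gbdry G S \<and>
     (\<forall>i<N. openin (Metric_space.mtopology (gbdry G S) d) (U i) \<and>
            f i ` U i \<subseteq> gbdry G S \<and> (L i :: real) > 1 \<and>
            (\<forall>x\<in>U i. \<forall>y\<in>U i. d (f i x) (f i y) \<ge> L i * d x y))"
proof -
  obtain \<delta> :: real where d0: "\<delta> \<ge> 0" and fp: "\<forall>w\<in>carrier G. \<forall>x\<in>carrier G. \<forall>y\<in>carrier G. \<forall>z\<in>carrier G.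
        gprod G S w x z \<ge> min (gprod G S w x y) (gprod G S w y z) - \<delta>"
    using assms(3) unfolding cayley_hyperbolic_def by blast
  obtain p a where p: "p \<in> carrier G" and a: "a > 1" and ms: "Metric_space (gbdry G S) d"
    and C: "\<exists>C1 C2::real. C1 > 0 \<and> C2 > 0 \<and>
          (\<forall>x\<in>gbdry G S. \<forall>y\<in>gbdry G S. x \<noteq> y \<longrightarrow>
             C1 * a powr (- real_of_ereal (gprod_bd G S p x y)) \<le> d x y \<and>
             d x y \<le> C2 * a powr (- real_of_ereal (gprod_bd G S p x y)))"
    using assms(4) unfolding visual_metric_def by blast
  obtain C1 C2 :: real where C1: "C1 > 0" and C2: "C2 > 0" and vv: "\<forall>x\<in>gbdry G S. \<forall>y\<in>gbdry G S. x \<noteq> y \<longrightarrow>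
             C1 * a powr (- real_of_ereal (gprod_bd G S p x y)) \<le> d x y \<and>
             d x y \<le> C2 * a powr (- real_of_ereal (gprod_bd G S p x y))"
    using C by blast
  have "vis G S \<delta> p a C1 C2 d"
    unfolding vis_def vis_axioms_def hypd_def hypd_axioms_def hypg_def hypg_axioms_def
    using assms(1,2) d0 fp p a ms C1 C2 vv by auto
  then show ?thesis by (rule vis.main)
qed

end
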